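(* Let $k\ge1$ and $r=\sqrt[k]{p}$. On recursion level $t$ ($1\le t\le k$) of multi-level MS, string-based regular sampling with sampling factor $v>0$ yields buckets of size $|B^j|\le\bigl(1+\frac{r}{v}\bigr)^t\frac{n}{r^t}$.
   Context: $p$ PEs hold in total $n$ strings. Multi-level MS (with $p=r^k$): each PE sorts its local strings; then on each level $t=1,\dots,k$ the PEs form $r^{t-1}$ groups of $p'=r^{k+1-t}$ consecutive PEs, each group independently sorting the concatenation $S'$ of its PEs' locally sorted arrays $S_i$ (the strings of a group on level $t>1$ are exactly one bucket of the previous level): $r-1$ splitters $f_1<\dots<f_{r-1}$ are chosen, bucket $B^j=\bigcup_i\{s\in S_i: f_j<s\le f_{j+1}\}$ ($f_0=-\infty,f_r=\infty$) is sent to the $j$-th subgroup of $p'/r$ PEs, and received sequences are merged. String-based regular sampling with sampling factor $v$: let $\omega=|S'|/(p'(v+1))$, where it is assumed that $|S'|$ is divisible by $p'(v+1)$; PE $i$ draws $\lceil|S_i|/\omega\rceil-1$ samples spaced as evenly as possible from its sorted local array; if the total number of samples is smaller than $p'(v+1)$, the first $p'(v+1)-|V|$ PEs draw one additional sample each. The samples $V$ are sorted globally and $f_j=V[j|V|/r-1]$ for $0<j<r$. *)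

theory Defs
  imports Complex_Main "HOL-Library.Multiset"
begin

text \<open>Strings are elements of an arbitrary linear
order (the lexicographic order on strings is an instance).  PEs are numbered
0..p-1, levels t = 1..k.

  D t i : the locally sorted array of PE i at the start of level t.
  Q t i : the (0-based) positions in D t i of the samples PE i draws on level t.\<close>

definition gsz :: "nat \<Rightarrow> nat \<Rightarrow> nat \<Rightarrow> nat" where
  "gsz r k t = r ^ (k + 1 - t)"

definition gpes :: "nat \<Rightarrow> nat \<Rightarrow> nat \<Rightarrow> nat \<Rightarrow> nat list" where
  "gpes r k t g = [g * gsz r k t ..< Suc g * gsz r k t]"

definition gtotal :: "nat \<Rightarrow> nat \<Rightarrow> (nat \<Rightarrow> nat \<Rightarrow> 'a list) \<Rightarrow> nat \<Rightarrow> nat \<Rightarrow> nat" where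
  "gtotal r k D t g = (\<Sum>i\<leftarrow>gpes r k t g. length (D t i))"

definition omega :: "nat \<Rightarrow> nat \<Rightarrow> nat \<Rightarrow> (nat \<Rightarrow> nat \<Rightarrow> 'a list) \<Rightarrow> nat \<Rightarrow> nat \<Rightarrow> real" where
  "omega r k v D t g = real (gtotal r k D t g) / real (gsz r k t * (v + 1))"

definition base_samples :: "nat \<Rightarrow> nat \<Rightarrow> nat \<Rightarrow> (nat \<Rightarrow> nat \<Rightarrow> 'a list) \<Rightarrow> nat \<Rightarrow> nat \<Rightarrow> nat \<Rightarrow> nat" where
  "base_samples r k v D t g i =
     nat \<lceil>real (length (D t i)) / omega r k v D t g\<rceil> - 1"

text \<open>Number of samples PE i of group g draws on level t, including the one
additional sample drawn by the first p'(v+1) - |V| PEs of the group.\<close>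
definition num_samples :: "nat \<Rightarrow> nat \<Rightarrow> nat \<Rightarrow> (nat \<Rightarrow> nat \<Rightarrow> 'a list) \<Rightarrow> nat \<Rightarrow> nat \<Rightarrow> nat \<Rightarrow> nat" where
  "num_samples r k v D t g i =
     base_samples r k v D t g i +
     (if i - g * gsz r k t < gsz r k t * (v + 1) - (\<Sum>i'\<leftarrow>gpes r k t g. base_samples r k v D t g i')
      then 1 else 0)"

text \<open>Sample positions qs in an array of length m, spaced as evenly as possible:
with virtual boundary positions -1 and m, the positions are strictly increasing
and all distances between consecutive positions differ by at most one.\<close>
definition evenly_spaced :: "nat \<Rightarrow> nat list \<Rightarrow> bool" where
  "evenly_spaced m qs =
     (let bs = (-1) # map int qs @ [int m];
          ds = map (\<lambda>l. bs ! Suc l - bs ! l) [0..<Suc (length qs)]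
      in sorted_wrt (<) bs \<and> (\<forall>a\<in>set ds. \<forall>b\<in>set ds. \<bar>a - b\<bar> \<le> 1))"

definition sample_seq :: "nat \<Rightarrow> nat \<Rightarrow> (nat \<Rightarrow> nat \<Rightarrow> 'a::linorder list) \<Rightarrow> (nat \<Rightarrow> nat \<Rightarrow> nat list) \<Rightarrow> nat \<Rightarrow> nat \<Rightarrow> 'a list" where
  "sample_seq r k D Q t g = sort (concat (map (\<lambda>i. map (\<lambda>q. D t i ! q) (Q t i)) (gpes r k t g)))"

text \<open>Splitter f_j = V[j|V|/r - 1] (meaningful for 0 < j < r).\<close>
definition splitter :: "nat \<Rightarrow> nat \<Rightarrow> (nat \<Rightarrow> nat \<Rightarrow> 'a::linorder list) \<Rightarrow> (nat \<Rightarrow> nat \<Rightarrow> nat list) \<Rightarrow> nat \<Rightarrow> nat \<Rightarrow> nat \<Rightarrow> 'a" where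
  "splitter r k D Q t g j = (let V = sample_seq r k D Q t g in V ! (j * length V div r - 1))"

text \<open>f_j < s <= f_(j+1), with f_0 = -infinity and f_r = infinity.\<close>
definition in_bucket :: "nat \<Rightarrow> nat \<Rightarrow> (nat \<Rightarrow> nat \<Rightarrow> 'a::linorder list) \<Rightarrow> (nat \<Rightarrow> nat \<Rightarrow> nat list) \<Rightarrow> nat \<Rightarrow> nat \<Rightarrow> nat \<Rightarrow> 'a \<Rightarrow> bool" where
  "in_bucket r k D Q t g j s =
     ((j = 0 \<or> splitter r k D Q t g j < s) \<and> (Suc j = r \<or> s \<le> splitter r k D Q t g (Suc j)))"

definition bucket :: "nat \<Rightarrow> nat \<Rightarrow> (nat \<Rightarrow> nat \<Rightarrow> 'a::linorder list) \<Rightarrow> (nat \<Rightarrow> nat \<Rightarrow> nat list) \<Rightarrow> nat \<Rightarrow> nat \<Rightarrow> nat \<Rightarrow> 'a list" where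
  "bucket r k D Q t g j = concat (map (\<lambda>i. filter (in_bucket r k D Q t g j) (D t i)) (gpes r k t g))"

definition subgroup_pes :: "nat \<Rightarrow> nat \<Rightarrow> nat \<Rightarrow> nat \<Rightarrow> nat \<Rightarrow> nat list" where
  "subgroup_pes r k t g j = [g * gsz r k t + j * gsz r k (Suc t) ..< g * gsz r k t + Suc j * gsz r k (Suc t)]"

text \<open>How a bucket is distributed among the PEs of its subgroup is not specified,
so any distribution is allowed; received sequences are merged (sorted).\<close>
definition ms_execution :: "nat \<Rightarrow> nat \<Rightarrow> nat \<Rightarrow> (nat \<Rightarrow> 'a::linorder list) \<Rightarrow> (nat \<Rightarrow> nat \<Rightarrow> 'a list) \<Rightarrow> (nat \<Rightarrow> nat \<Rightarrow> nat list) \<Rightarrow> bool" where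
  "ms_execution r k v inp D Q \<longleftrightarrow>
     (\<forall>i < r ^ k. D 1 i = sort (inp i)) \<and>
     (\<forall>t\<in>{1..<k}. \<forall>g < r ^ (t - 1). \<forall>j < r.
        (\<Sum>i\<leftarrow>subgroup_pes r k t g j. mset (D (Suc t) i)) = mset (bucket r k D Q t g j) \<and>
        (\<forall>i\<in>set (subgroup_pes r k t g j). sorted (D (Suc t) i))) \<and>
     (\<forall>t\<in>{1..k}. \<forall>g < r ^ (t - 1). \<forall>i\<in>set (gpes r k t g).
        length (Q t i) = num_samples r k v D t g i \<and> evenly_spaced (length (D t i)) (Q t i))"

end

theory Submission
  imports Defs
begin

lemma gap_bound:
  fixes d :: "nat \<Rightarrow> int" and w :: int
  assumes close: "\<forall>l1\<le>c. \<forall>l2\<le>c. \<bar>d l1 - d l2\<bar> \<le> 1"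
    and tot: "(\<Sum>l=0..c. d l) \<le> w * (int c + 1) + 1"
    and ab: "a \<le> b" "b \<le> c"
  shows "(\<Sum>l=a..b. d l) \<le> (int b + 1 - int a) * w + 1"
proof (cases "\<exists>l0\<le>c. d l0 \<le> w - 1")
  case True
  then obtain l0 where "l0 \<le> c" "d l0 \<le> w - 1" by blast
  then have "\<forall>l\<in>{a..b}. d l \<le> w"
  proof (intro ballI)
    fix l assume "l \<in> {a..b}"
    then have "\<bar>d l - d l0\<bar> \<le> 1" using close ab \<open>l0 \<le> c\<close> by auto
    then show "d l \<le> w" using \<open>d l0 \<le> w - 1\<close> by (simp add: abs_le_iff)
  qed
  then have "(\<Sum>l=a..b. d l) \<le> (\<Sum>l=a..b. w)" by (intro sum_mono) auto
  also have "\<dots> = (int b + 1 - int a) * w" using ab by simp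
  finally show ?thesis by simp
next
  case False
  then have ge: "\<forall>l\<le>c. d l \<ge> w" by force
  have sub: "{a..b} \<subseteq> {0..c}" using ab by auto
  have "(\<Sum>l=0..c. d l) = (\<Sum>l\<in>{0..c} - {a..b}. d l) + (\<Sum>l=a..b. d l)"
    using sum.subset_diff[OF sub] by simp
  moreover have "(\<Sum>l\<in>{0..c} - {a..b}. d l) \<ge> (\<Sum>l\<in>{0..c} - {a..b}. w)"
    using ge by (intro sum_mono) auto
  moreover have "card ({0..c} - {a..b}) = c + 1 - (b + 1 - a)"
    using sub ab by (simp add: card_Diff_subset)
  moreover have "(\<Sum>l\<in>{0..c} - {a..b}. w) = int (c + 1 - (b + 1 - a)) * w"
    using \<open>card ({0..c} - {a..b}) = c + 1 - (b + 1 - a)\<close> by simp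
  ultimately have "(\<Sum>l=a..b. d l) \<le> w * (int c + 1) + 1 - int (c + 1 - (b + 1 - a)) * w"
    using tot by linarith
  also have "\<dots> = (int b + 1 - int a) * w + 1" using ab by (simp add: of_nat_diff algebra_simps)
  finally show ?thesis .
qed

lemma filter_takeWhile_sorted:
  assumes "sorted ys" "\<forall>x y. P y \<longrightarrow> x \<le> y \<longrightarrow> P x"
  shows "filter P ys = takeWhile P ys"
  using assms
proof (induction ys)
  case Nil then show ?case by simp
next
  case (Cons y ys)
  show ?case
  proof (cases "P y")
    case True then show ?thesis using Cons by simp
  next
    case False
    then have "\<forall>z\<in>set ys. \<not> P z" using Cons.prems by auto
    then show ?thesis using False by (simp add: filter_empty_conv)
  qed
qed

lemma pe_bound:
  fixes xs :: "'a::linorder list" and qs :: "nat list" and w :: nat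
  assumes srt: "sorted xs" and es: "evenly_spaced (length xs) qs"
    and cap: "length xs \<le> w * (length qs + 1)"
    and upA: "\<forall>x y. A x \<longrightarrow> x \<le> y \<longrightarrow> A y"
    and dnB: "\<forall>x y. B y \<longrightarrow> x \<le> y \<longrightarrow> B x"
    and AB: "\<forall>s. \<not> A s \<longrightarrow> B s"
  shows "length (filter (\<lambda>s. A s \<and> B s) xs) + length (filter (\<lambda>s. \<not> A s) (map (nth xs) qs)) * w
         \<le> (length (filter B (map (nth xs) qs)) + 1) * w"
proof -
  define m where "m = length xs"
  define c where "c = length qs"
  define bs :: "int list" where "bs = (-1) # map int qs @ [int m]"
  define d where "d = (\<lambda>l. bs ! Suc l - bs ! l)"
  define ds where "ds = map d [0..<Suc c]"
  have sw: "sorted_wrt (<) bs" and close0: "\<forall>x\<in>set ds. \<forall>y\<in>set ds. \<bar>x - y\<bar> \<le> 1"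
    using es unfolding evenly_spaced_def Let_def bs_def ds_def d_def m_def c_def by auto
  have lbs: "length bs = c + 2" unfolding bs_def c_def by simp
  have bs0: "bs ! 0 = -1" unfolding bs_def by simp
  have bsS: "bs ! Suc l = int (qs ! l)" if "l < c" for l
    using that unfolding bs_def c_def by (simp add: nth_append)
  have bsc: "bs ! Suc c = int m" unfolding bs_def c_def by (simp add: nth_append)
  have mono: "bs ! i < bs ! j" if "i < j" "j < c + 2" for i j
    using sw that lbs by (simp add: sorted_wrt_iff_nth_less)
  have qs_lt: "qs ! l < m" if "l < c" for l
    using mono[of "Suc l" "Suc c"] bsS[OF that] bsc that by simp
  have qs_mono: "qs ! l1 < qs ! l2" if "l1 < l2" "l2 < c" for l1 l2
    using mono[of "Suc l1" "Suc l2"] bsS that by simp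
  define ys where "ys = map (nth xs) qs"
  have lys: "length ys = c" unfolding ys_def c_def by simp
  have ysn: "ys ! l = xs ! (qs ! l)" if "l < c" for l using that unfolding ys_def c_def by simp
  have sys: "sorted ys"
  proof (subst sorted_iff_nth_mono, intro allI impI)
    fix i j assume "i \<le> j" "j < length ys"
    then have "qs ! i \<le> qs ! j" using qs_mono lys by (cases "i = j") (auto simp: less_imp_le)
    then show "ys ! i \<le> ys ! j" using \<open>i \<le> j\<close> \<open>j < length ys\<close> lys ysn qs_lt srt
      by (simp add: sorted_nth_mono m_def)
  qed
  have dnA: "\<forall>x y. \<not> A y \<longrightarrow> x \<le> y \<longrightarrow> \<not> A x" using upA by blast
  define a where "a = length (filter (\<lambda>s. \<not> A s) ys)"
  define b where "b = length (filter B ys)"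
  have a_tw: "a = length (takeWhile (\<lambda>s. \<not> A s) ys)"
    unfolding a_def using filter_takeWhile_sorted[OF sys dnA] by simp
  have b_tw: "b = length (takeWhile B ys)"
    unfolding b_def using filter_takeWhile_sorted[OF sys dnB] by simp
  have a_le: "a \<le> c" unfolding a_def using lys by (metis length_filter_le)
  have b_le: "b \<le> c" unfolding b_def using lys by (metis length_filter_le)
  have a_in: "\<not> A (ys ! l)" if "l < a" for l
  proof -
    have "takeWhile (\<lambda>s. \<not> A s) ys ! l = ys ! l" using that a_tw takeWhile_nth by metis
    moreover have "takeWhile (\<lambda>s. \<not> A s) ys ! l \<in> set (takeWhile (\<lambda>s. \<not> A s) ys)"
      using that a_tw by simp
    ultimately show ?thesis by (metis set_takeWhileD)
  qed
  have a_out: "A (ys ! a)" if "a < c"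
    using nth_length_takeWhile[of "\<lambda>s. \<not> A s" ys] that a_tw lys by simp
  have b_in: "B (ys ! l)" if "l < b" for l
  proof -
    have "takeWhile B ys ! l = ys ! l" using that b_tw takeWhile_nth by metis
    moreover have "takeWhile B ys ! l \<in> set (takeWhile B ys)"
      using that b_tw by simp
    ultimately show ?thesis by (metis set_takeWhileD)
  qed
  have b_out: "\<not> B (ys ! b)" if "b < c"
    using nth_length_takeWhile[of B ys] that b_tw lys by simp
  have ab: "a \<le> b"
  proof (rule ccontr)
    assume "\<not> a \<le> b"
    then have "b < a" "b < c" using a_le by auto
    then show False using a_in[of b] b_out AB by blast
  qed
  define L where "L = (if a = 0 then 0 else Suc (qs ! (a - 1)))"
  define H where "H = (if b < c then qs ! b else m)"
  have posL: "L \<le> p \<and> p < H" if "p < m" "A (xs ! p)" "B (xs ! p)" for p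
  proof
    show "L \<le> p"
    proof (cases "a = 0")
      case False
      have "qs ! (a - 1) < p"
      proof (rule ccontr)
        assume "\<not> qs ! (a - 1) < p"
        then have "xs ! p \<le> xs ! (qs ! (a - 1))"
          using srt qs_lt[of "a - 1"] False a_le by (simp add: sorted_nth_mono m_def)
        moreover have "\<not> A (xs ! (qs ! (a - 1)))" using a_in[of "a - 1"] ysn[of "a - 1"] False a_le by simp
        ultimately show False using dnA that(2) by blast
      qed
      then show ?thesis unfolding L_def using False by simp
    qed (simp add: L_def)
    show "p < H"
    proof (cases "b < c")
      case True
      have "p < qs ! b"
      proof (rule ccontr)
        assume "\<not> p < qs ! b"
        then have "xs ! (qs ! b) \<le> xs ! p"
          using srt that(1) by (simp add: sorted_nth_mono m_def)
        moreover have "\<not> B (xs ! (qs ! b))" using b_out True ysn by simp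
        ultimately show False using dnB that(3) by blast
      qed
      then show ?thesis unfolding H_def using True by simp
    qed (simp add: H_def that)
  qed
  have cnt: "length (filter (\<lambda>s. A s \<and> B s) xs) \<le> H - L"
  proof -
    have "length (filter (\<lambda>s. A s \<and> B s) xs) = card {p. p < m \<and> A (xs ! p) \<and> B (xs ! p)}"
      unfolding m_def by (simp add: length_filter_conv_card)
    also have "\<dots> \<le> card {L..<H}" using posL by (intro card_mono) auto
    finally show ?thesis by simp
  qed
  have bsa: "bs ! a = int L - 1"
    using bs0 bsS[of "a - 1"] a_le unfolding L_def by (cases a) auto
  have bsb: "bs ! Suc b = int H"
    using bsS[of b] bsc b_le unfolding H_def by (auto simp: le_less)
  have LH: "L \<le> H" using mono[of a "Suc b"] ab b_le bsa bsb by simp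
  have sumab: "(\<Sum>l=a..b. d l) = bs ! Suc b - bs ! a"
    unfolding d_def using ab by (intro sum_Suc_diff) simp
  have sum0c: "(\<Sum>l=0..c. d l) = int m + 1"
    unfolding d_def using sum_Suc_diff[of 0 c "\<lambda>l. bs ! l"] bs0 bsc by simp
  have close: "\<forall>l1\<le>c. \<forall>l2\<le>c. \<bar>d l1 - d l2\<bar> \<le> 1"
  proof (intro allI impI)
    fix l1 l2 assume "l1 \<le> c" "l2 \<le> c"
    then have "d l1 \<in> set ds" "d l2 \<in> set ds" unfolding ds_def
      by (simp_all del: upt_Suc add: image_iff) (metis atLeastLessThan_iff le_imp_less_Suc zero_le)+
    then show "\<bar>d l1 - d l2\<bar> \<le> 1" using close0 by blast
  qed
  have tot: "(\<Sum>l=0..c. d l) \<le> int w * (int c + 1) + 1"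
  proof -
    have "int m \<le> int (w * (c + 1))" using cap unfolding m_def c_def by linarith
    then show ?thesis using sum0c by (simp add: algebra_simps)
  qed
  have "(\<Sum>l=a..b. d l) \<le> (int b + 1 - int a) * int w + 1"
    by (rule gap_bound[OF close tot ab b_le])
  then have "int H - int L \<le> (int b + 1 - int a) * int w"
    using sumab bsa bsb by simp
  then have "int (H - L) + int a * int w \<le> (int b + 1) * int w"
    using LH by (simp add: of_nat_diff algebra_simps)
  then have "int (H - L + a * w) \<le> int ((b + 1) * w)" by (simp add: algebra_simps)
  then have "H - L + a * w \<le> (b + 1) * w" by linarith
  then show ?thesis using cnt unfolding a_def b_def ys_def by simp
qed



lemma distinct_msub:
  assumes "mset xs \<subseteq># mset ys" "distinct ys"
  shows "distinct xs"
proof -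
  have "count (mset xs) a \<le> 1" for a
    using assms mset_subset_eq_count[OF assms(1), of a] distinct_count_atmost_1[of ys]
    by (metis order_trans le_numeral_extra(4) zero_le)
  then show ?thesis unfolding distinct_count_atmost_1
    by (metis count_eq_zero_iff le_antisym less_one not_le set_mset_mset)
qed

lemma distinct_concat_msub:
  assumes "\<forall>i\<in>set L. mset (f i) \<subseteq># mset (h i)" "distinct (concat (map h L))"
  shows "distinct (concat (map f L))"
proof -
  have "mset (concat (map f L)) \<subseteq># mset (concat (map h L))"
    using assms(1)
  proof (induction L)
    case Nil then show ?case by simp
  next
    case (Cons x L)
    then show ?case by (simp add: subset_mset.add_mono)
  qed
  then show ?thesis using assms(2) distinct_msub by blast
qed

lemma mset_map_nth_sub:
  assumes "distinct qs" "\<forall>q\<in>set qs. q < length xs"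
  shows "mset (map (nth xs) qs) \<subseteq># mset xs"
proof -
  have "mset qs = mset_set (set qs)" using assms(1) by (simp add: mset_set_set)
  also have "\<dots> \<subseteq># mset_set {0..<length xs}" using assms(2)
    by (intro subset_imp_msubset_mset_set) auto
  also have "\<dots> = mset [0..<length xs]" by (simp add: mset_set_set[symmetric])
  finally have "image_mset (nth xs) (mset qs) \<subseteq># image_mset (nth xs) (mset [0..<length xs])"
    by (rule image_mset_subseteq_mono)
  then show ?thesis by (simp add: map_nth[symmetric] del: mset_upt) (metis map_nth mset_map)
qed

lemma es_props:
  assumes "evenly_spaced m qs"
  shows "sorted_wrt (<) qs" "\<forall>q\<in>set qs. q < m"
  using assms unfolding evenly_spaced_def Let_def
  by (auto simp: sorted_wrt_append sorted_wrt_map)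

lemma cnt_sorted:
  fixes V :: "'a::linorder list"
  assumes "sorted_wrt (<) V" "i < length V"
  shows "length (filter (\<lambda>s. s \<le> V ! i) V) = Suc i"
proof -
  have "{p. p < length V \<and> V ! p \<le> V ! i} = {..i}"
  proof (intro set_eqI iffI)
    fix p assume "p \<in> {p. p < length V \<and> V ! p \<le> V ! i}"
    then show "p \<in> {..i}" using sorted_wrt_nth_less[OF assms(1), of i p] by (auto simp: not_le[symmetric])
  next
    fix p assume "p \<in> {..i}"
    then show "p \<in> {p. p < length V \<and> V ! p \<le> V ! i}"
      using sorted_wrt_nth_less[OF assms(1), of p i] assms(2) by (cases "p = i") auto
  qed
  then show ?thesis by (simp add: length_filter_conv_card)
qed

lemma ceil_facts:
  fixes l w :: nat
  assumes "w > 0"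
  shows "w * (nat \<lceil>real l / real w\<rceil> - 1) \<le> l \<and> l \<le> w * (nat \<lceil>real l / real w\<rceil> - 1 + 1)"
proof -
  define x where "x = real l / real w"
  define c where "c = \<lceil>x\<rceil>"
  have x0: "x \<ge> 0" unfolding x_def by simp
  have c1: "x \<le> c" "c < x + 1" unfolding c_def by linarith+
  have lw: "real l = real w * x" unfolding x_def using assms by simp
  show ?thesis
  proof (cases "c = 0")
    case True
    then have "l = 0" using c1 x0 lw by simp
    then show ?thesis by simp
  next
    case False
    then have cp: "c > 0" using c1 x0 by linarith
    then have e: "real (nat c - 1 + 1) = of_int c" by simp
    have e2: "real (nat c - 1) = of_int c - 1" using cp by (simp add: of_nat_diff)
    have "real w * (of_int c - 1) \<le> real w * x" using c1 by (intro mult_left_mono) auto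
    then have A: "real (w * (nat c - 1)) \<le> real l" using lw e2 by simp
    have "real w * x \<le> real w * of_int c" using c1 by (intro mult_left_mono) auto
    then have B: "real l \<le> real (w * (nat c - 1 + 1))" using lw e by (simp only: of_nat_mult)
    from A B show ?thesis unfolding c_def x_def by (simp only: of_nat_le_iff)
  qed
qed



lemma gpes_set: "set (gpes r k t g) = {g * gsz r k t..<Suc g * gsz r k t}"
  unfolding gpes_def by simp

lemma sum_list_gpes: "(\<Sum>i\<leftarrow>gpes r k t g. f i) = (\<Sum>i\<in>{g * gsz r k t..<Suc g * gsz r k t}. f i)"
  unfolding gpes_def by (simp add: interv_sum_list_conv_sum_set_nat)

lemma len_filter_sort: "length (filter P (sort xs)) = length (filter P xs)"
proof -
  have "mset (filter P (sort xs)) = mset (filter P xs)" by simp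
  then show ?thesis by (metis size_mset)
qed

lemma len_filter_concat: "length (filter P (concat xss)) = (\<Sum>xs\<leftarrow>xss. length (filter P xs))"
  by (simp add: filter_concat length_concat o_def)

lemma level_bound:
  fixes D :: "nat \<Rightarrow> nat \<Rightarrow> 'a::linorder list" and Q :: "nat \<Rightarrow> nat \<Rightarrow> nat list"
  assumes r1: "r \<ge> 1" and v0: "v > 0" and tk: "t \<le> k" and jr: "j < r"
    and dist: "distinct (concat (map (D t) (gpes r k t g)))"
    and srt: "\<forall>i\<in>set (gpes r k t g). sorted (D t i)"
    and Qc: "\<forall>i\<in>set (gpes r k t g). length (Q t i) = num_samples r k v D t g i \<and> evenly_spaced (length (D t i)) (Q t i)"
    and dv: "(gsz r k t * (v + 1)) dvd gtotal r k D t g"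
  shows "real (length (bucket r k D Q t g j)) \<le> real (gtotal r k D t g) * (1 / real r + 1 / real (v + 1))"
proof -
  define P where "P = gsz r k t"
  define N where "N = gtotal r k D t g"
  define I where "I = {g * P..<Suc g * P}"
  have I_eq: "set (gpes r k t g) = I" unfolding I_def P_def by (rule gpes_set)
  have sumI: "(\<Sum>i\<leftarrow>gpes r k t g. f i) = (\<Sum>i\<in>I. f i)" for f :: "nat \<Rightarrow> 'b::comm_monoid_add"
    unfolding I_def P_def by (rule sum_list_gpes)
  have Ppos: "P > 0" unfolding P_def gsz_def using r1 by simp
  have N_eq: "N = (\<Sum>i\<in>I. length (D t i))" unfolding N_def gtotal_def by (rule sumI)
  have lenB: "length (bucket r k D Q t g j) = (\<Sum>i\<in>I. length (filter (in_bucket r k D Q t g j) (D t i)))"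
    unfolding bucket_def by (simp add: length_concat sumI o_def)
  obtain w where Nw: "N = P * (v + 1) * w" using dv unfolding N_def P_def by blast
  show ?thesis
  proof (cases "w = 0")
    case True
    then have "N = 0" using Nw by simp
    then have "\<forall>i\<in>I. length (D t i) = 0" using N_eq by (simp add: I_def)
    then have "length (bucket r k D Q t g j) = 0" using lenB by simp
    then show ?thesis by simp
  next
    case False
    then have w0: "w > 0" by simp
    have om: "omega r k v D t g = real w"
    proof -
      have "real (P * (v + 1)) > 0" using Ppos by (simp del: of_nat_mult of_nat_add)
      then show ?thesis unfolding omega_def N_def[symmetric] P_def[symmetric] Nw
        by (simp only: of_nat_mult) (simp add: field_simps)
    qed
    define bs where "bs = (\<lambda>i. base_samples r k v D t g i)"
    have bsf: "w * bs i \<le> length (D t i) \<and> length (D t i) \<le> w * (bs i + 1)" for i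
      unfolding bs_def base_samples_def om using ceil_facts[OF w0] by blast
    define Sb where "Sb = (\<Sum>i\<in>I. bs i)"
    have cI: "card I = P" unfolding I_def by simp
    have "w * Sb \<le> N" unfolding Sb_def N_eq sum_distrib_left using bsf by (intro sum_mono) auto
    then have Sb1: "Sb \<le> P * (v + 1)" using Nw w0 by (simp add: mult.commute)
    have "N \<le> w * (Sb + P)"
    proof -
      have "N \<le> (\<Sum>i\<in>I. w * (bs i + 1))" unfolding N_eq using bsf by (intro sum_mono) auto
      also have "\<dots> = w * (\<Sum>i\<in>I. bs i + 1)" by (simp add: sum_distrib_left)
      also have "(\<Sum>i\<in>I. bs i + 1) = Sb + P" unfolding Sb_def using cI
        by (simp only: sum.distrib) simp
      finally show ?thesis .
    qed
    then have Sb2: "P * (v + 1) \<le> Sb + P" using Nw w0 by (simp add: mult.commute)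
    define del where "del = P * (v + 1) - Sb"
    have delP: "del \<le> P" using Sb2 unfolding del_def by simp
    have ns: "num_samples r k v D t g i = bs i + (if i - g * P < del then 1 else 0)" for i
      unfolding num_samples_def bs_def del_def P_def Sb_def I_def
      by (simp add: sum_list_gpes)
    define samp where "samp = (\<lambda>i. map (nth (D t i)) (Q t i))"
    define V where "V = sample_seq r k D Q t g"
    have V_def': "V = sort (concat (map samp (gpes r k t g)))"
      unfolding V_def sample_seq_def samp_def by simp
    have lenV: "length V = P * (v + 1)"
    proof -
      have "length V = (\<Sum>i\<in>I. length (Q t i))"
        unfolding V_def' by (simp add: length_concat sumI samp_def o_def)
      also have "\<dots> = (\<Sum>i\<in>I. bs i + (if i - g * P < del then 1 else 0))"
        using Qc I_eq ns by (intro sum.cong) auto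
      also have "\<dots> = Sb + card {i\<in>I. i - g * P < del}"
        unfolding Sb_def I_def by (simp add: sum.distrib sum.If_cases) (simp add: Int_def conj_assoc)
      also have "{i\<in>I. i - g * P < del} = {g * P..<g * P + del}"
        unfolding I_def using delP by auto
      finally show ?thesis unfolding del_def using Sb1 by simp
    qed
    define M where "M = P * (v + 1) div r"
    have rP: "r dvd P" unfolding P_def gsz_def using tk
      by (metis Suc_diff_le Suc_eq_plus1 dvd_refl dvd_power le_SucI not_less_eq_eq zero_less_Suc)
    have PM: "P * (v + 1) = r * M"
    proof -
      from rP obtain P' where "P = r * P'" by blast
      then show ?thesis unfolding M_def using r1 by (simp add: algebra_simps)
    qed
    have "P * (v + 1) > 0" using Ppos by simp
    then have "r * M > 0" by (simp only: PM)
    then have Mpos: "M > 0" by simp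
    have r0: "r > 0" using r1 by simp
    have distV: "distinct V" unfolding V_def' distinct_sort
    proof (rule distinct_concat_msub[OF _ dist], intro ballI)
      fix i assume "i \<in> set (gpes r k t g)"
      then have "evenly_spaced (length (D t i)) (Q t i)" using Qc by blast
      then have "distinct (Q t i)" "\<forall>q\<in>set (Q t i). q < length (D t i)"
        using es_props strict_sorted_iff by blast+
      then show "mset (samp i) \<subseteq># mset (D t i)" unfolding samp_def by (rule mset_map_nth_sub)
    qed
    have sortV: "sorted_wrt (<) V" using distV unfolding strict_sorted_iff V_def' by simp
    have sV: "sorted V" unfolding V_def' by simp
    have spl: "splitter r k D Q t g i = V ! (i * M - 1)" for i
      unfolding splitter_def Let_def V_def[symmetric] lenV PM using r0 by simp
    define A where "A = (\<lambda>s. j = 0 \<or> V ! (j * M - 1) < s)"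
    define B where "B = (\<lambda>s. Suc j = r \<or> s \<le> V ! (Suc j * M - 1))"
    have inb: "in_bucket r k D Q t g j = (\<lambda>s. A s \<and> B s)"
      unfolding in_bucket_def spl A_def B_def by auto
    have upA: "\<forall>x y. A x \<longrightarrow> x \<le> y \<longrightarrow> A y" unfolding A_def by auto
    have dnB: "\<forall>x y. B y \<longrightarrow> x \<le> y \<longrightarrow> B x" unfolding B_def by auto
    have AB: "\<forall>s. \<not> A s \<longrightarrow> B s"
    proof (intro allI impI)
      fix s assume "\<not> A s"
      then have s1: "s \<le> V ! (j * M - 1)" unfolding A_def by auto
      show "B s"
      proof (cases "Suc j = r")
        case False
        then have "Suc j < r" using jr by simp
        then have "Suc j * M < r * M" using Mpos by (intro mult_less_mono1)
        then have "Suc j * M - 1 < r * M" by linarith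
      then have "Suc j * M - 1 < length V" unfolding lenV PM .
        moreover have "j * M - 1 \<le> Suc j * M - 1" by simp
        ultimately have "V ! (j * M - 1) \<le> V ! (Suc j * M - 1)" using sV by (simp add: sorted_nth_mono)
        then show ?thesis using s1 order_trans unfolding B_def by blast
      qed (simp add: B_def)
    qed
    have pe: "length (filter (\<lambda>s. A s \<and> B s) (D t i)) + length (filter (\<lambda>s. \<not> A s) (samp i)) * w
         \<le> (length (filter B (samp i)) + 1) * w" if "i \<in> I" for i
    proof -
      have q: "length (Q t i) = num_samples r k v D t g i" "evenly_spaced (length (D t i)) (Q t i)"
        using Qc that I_eq by auto
      have "bs i \<le> length (Q t i)" using q(1) ns[of i] by simp
      then have "w * (bs i + 1) \<le> w * (length (Q t i) + 1)" by (intro mult_le_mono2) simp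
      then have "length (D t i) \<le> w * (length (Q t i) + 1)"
        using bsf[of i] by linarith
      then show ?thesis unfolding samp_def
        using pe_bound[of "D t i" "Q t i" w A B] srt that I_eq q(2) upA dnB AB by blast
    qed
    have "(\<Sum>i\<in>I. length (filter (\<lambda>s. A s \<and> B s) (D t i)) + length (filter (\<lambda>s. \<not> A s) (samp i)) * w)
         \<le> (\<Sum>i\<in>I. (length (filter B (samp i)) + 1) * w)"
      using pe by (rule sum_mono)
    then have main: "length (bucket r k D Q t g j) + length (filter (\<lambda>s. \<not> A s) V) * w
         \<le> (length (filter B V) + P) * w"
      unfolding lenB inb V_def' len_filter_sort len_filter_concat
      by (simp add: o_def sumI sum.distrib sum_distrib_right sum_distrib_left cI algebra_simps)
    have ca: "length (filter (\<lambda>s. \<not> A s) V) = j * M"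
    proof (cases "j = 0")
      case False
      have "j * M < r * M" using jr Mpos by (intro mult_less_mono1)
      then have "j * M - 1 < r * M" by linarith
      then have "j * M - 1 < length V" unfolding lenV PM .
      moreover have "(\<lambda>s. \<not> A s) = (\<lambda>s. s \<le> V ! (j * M - 1))" unfolding A_def using False by auto
      ultimately show ?thesis using cnt_sorted[OF sortV] False Mpos by simp
    qed (simp add: A_def)
    have cb: "length (filter B V) = Suc j * M"
    proof (cases "Suc j = r")
      case True
      then show ?thesis unfolding B_def using lenV PM by simp
    next
      case False
      then have "Suc j < r" using jr by simp
      then have "Suc j * M < r * M" using Mpos by (intro mult_less_mono1)
      then have "Suc j * M - 1 < r * M" by linarith
      then have "Suc j * M - 1 < length V" unfolding lenV PM .
      moreover have "B = (\<lambda>s. s \<le> V ! (Suc j * M - 1))" unfolding B_def using False by auto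
      ultimately show ?thesis using cnt_sorted[OF sortV] Mpos by simp
    qed
    have lb: "length (bucket r k D Q t g j) \<le> M * w + P * w"
      using main unfolding ca cb by (simp add: algebra_simps)
    have NrM: "N = r * M * w" using Nw PM by simp
    have e1: "real (M * w) = real N / real r" unfolding NrM using r0 by (simp add: field_simps)
    have e2: "real (P * w) = real N / real (v + 1)" using Nw by (simp add: field_simps)
    have "real (length (bucket r k D Q t g j)) \<le> real N / real r + real N / real (v + 1)"
      using lb e1 e2 by (metis of_nat_add of_nat_le_iff)
    then show ?thesis unfolding N_def by (simp add: algebra_simps add_divide_distrib)
  qed
qed



lemma gpes_sub:
  assumes "s < k" "r > 0"
  shows "gpes r k (Suc (Suc s)) g = subgroup_pes r k (Suc s) (g div r) (g mod r)"
proof -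
  define R where "R = r ^ (k - Suc s)"
  have g1: "gsz r k (Suc (Suc s)) = R" unfolding gsz_def R_def by simp
  have g2: "gsz r k (Suc s) = r * R" unfolding gsz_def R_def using assms(1)
    by (metis Suc_diff_Suc add.commute diff_Suc_Suc plus_1_eq_Suc power_Suc)
  have e: "g div r * (r * R) + g mod r * R = g * R"
    by (metis add_mult_distrib div_mult_mod_eq mult.assoc mult.commute)
  show ?thesis unfolding gpes_def subgroup_pes_def g1 g2
    using e by (simp add: algebra_simps)
qed

lemma real_step:
  fixes G n :: real and r v :: nat and s :: nat
  assumes "G \<ge> 0" "G \<le> (1 + real r / real v) ^ s * n / real r ^ s" "r > 0" "v > 0"
  shows "G * (1 / real r + 1 / real (v + 1)) \<le> (1 + real r / real v) ^ Suc s * n / real r ^ Suc s"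
proof -
  define X where "X = 1 + real r / real v"
  have "1 / real (v + 1) \<le> 1 / real v" using assms by (simp add: frac_le)
  then have "1 / real r + 1 / real (v + 1) \<le> X / real r" unfolding X_def using assms
    by (simp add: add_divide_distrib)
  then have "G * (1 / real r + 1 / real (v + 1)) \<le> G * (X / real r)"
    using assms(1) by (rule mult_left_mono)
  also have "\<dots> \<le> (X ^ s * n / real r ^ s) * (X / real r)"
    using assms(2) unfolding X_def[symmetric] using assms
    by (intro mult_right_mono) (auto simp: X_def)
  also have "\<dots> = X ^ Suc s * n / real r ^ Suc s" by (simp add: field_simps)
  finally show ?thesis unfolding X_def .
qed

lemma invariant:
  fixes D :: "nat \<Rightarrow> nat \<Rightarrow> 'a::linorder list" and Q :: "nat \<Rightarrow> nat \<Rightarrow> nat list"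
  assumes r1: "r \<ge> 1" and v0: "v > 0" and p: "p = r ^ k"
    and dist0: "distinct (concat (map inp [0..<p]))"
    and ex: "ms_execution r k v inp D Q"
    and dv: "\<forall>t'\<in>{1..k}. \<forall>g' < r ^ (t' - 1). (gsz r k t' * (v + 1)) dvd gtotal r k D t' g'"
  shows "s < k \<Longrightarrow> g < r ^ s \<Longrightarrow> distinct (concat (map (D (Suc s)) (gpes r k (Suc s) g)))
     \<and> (\<forall>i\<in>set (gpes r k (Suc s) g). sorted (D (Suc s) i))
     \<and> real (gtotal r k D (Suc s) g) \<le> (1 + real r / real v) ^ s * real (\<Sum>i<p. length (inp i)) / real r ^ s"
proof (induction s arbitrary: g)
  case 0
  then have g0: "g = 0" by simp
  have gp: "gpes r k (Suc 0) 0 = [0..<p]" unfolding gpes_def gsz_def p by simp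
  have D1: "\<forall>i\<in>set [0..<p]. D (Suc 0) i = sort (inp i)" using ex p unfolding ms_execution_def by auto
  have "distinct (concat (map (D (Suc 0)) [0..<p]))"
    by (rule distinct_concat_msub[OF _ dist0]) (simp add: D1)
  moreover have "\<forall>i\<in>set [0..<p]. sorted (D (Suc 0) i)" using D1 by simp
  moreover have "gtotal r k D (Suc 0) 0 = (\<Sum>i<p. length (inp i))"
    unfolding gtotal_def gp using D1
    by (simp add: interv_sum_list_conv_sum_set_nat atLeast0LessThan)
  ultimately show ?case using g0 gp by simp
next
  case (Suc s)
  have r0: "r > 0" using r1 by simp
  define g0 where "g0 = g div r"
  define j where "j = g mod r"
  have sk: "s < k" using Suc.prems by simp
  have g0s: "g0 < r ^ s" unfolding g0_def using Suc.prems(2)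
    by (simp add: less_mult_imp_div_less mult.commute)
  have jr: "j < r" unfolding j_def using r0 by simp
  have IH: "distinct (concat (map (D (Suc s)) (gpes r k (Suc s) g0)))"
    "\<forall>i\<in>set (gpes r k (Suc s) g0). sorted (D (Suc s) i)"
    "real (gtotal r k D (Suc s) g0) \<le> (1 + real r / real v) ^ s * real (\<Sum>i<p. length (inp i)) / real r ^ s"
    using Suc.IH[OF sk g0s] by auto
  have gsub: "gpes r k (Suc (Suc s)) g = subgroup_pes r k (Suc s) g0 j"
    unfolding g0_def j_def using gpes_sub[OF sk r0] .
  have tr: "Suc s \<in> {1..<k}" using Suc.prems by simp
  have exs: "(\<Sum>i\<leftarrow>subgroup_pes r k (Suc s) g0 j. mset (D (Suc (Suc s)) i)) = mset (bucket r k D Q (Suc s) g0 j)"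
    "\<forall>i\<in>set (subgroup_pes r k (Suc s) g0 j). sorted (D (Suc (Suc s)) i)"
    using ex tr g0s jr unfolding ms_execution_def by auto
  have msetc: "mset (concat (map (D (Suc (Suc s))) (gpes r k (Suc (Suc s)) g))) = mset (bucket r k D Q (Suc s) g0 j)"
    unfolding gsub mset_concat exs(1)[symmetric] by (simp add: o_def)
  have distB: "distinct (bucket r k D Q (Suc s) g0 j)"
    unfolding bucket_def by (rule distinct_concat_msub[OF _ IH(1)]) auto
  have d: "distinct (concat (map (D (Suc (Suc s))) (gpes r k (Suc (Suc s)) g)))"
    using distinct_msub[OF _ distB] msetc by simp
  have tot: "gtotal r k D (Suc (Suc s)) g = length (bucket r k D Q (Suc s) g0 j)"
  proof -
    have "gtotal r k D (Suc (Suc s)) g = length (concat (map (D (Suc (Suc s))) (gpes r k (Suc (Suc s)) g)))"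
      unfolding gtotal_def by (simp add: length_concat o_def)
    also have "\<dots> = size (mset (concat (map (D (Suc (Suc s))) (gpes r k (Suc (Suc s)) g))))" by simp
    also have "\<dots> = length (bucket r k D Q (Suc s) g0 j)" unfolding msetc by simp
    finally show ?thesis .
  qed
  have Qc: "\<forall>i\<in>set (gpes r k (Suc s) g0). length (Q (Suc s) i) = num_samples r k v D (Suc s) g0 i \<and> evenly_spaced (length (D (Suc s) i)) (Q (Suc s) i)"
    using ex g0s sk unfolding ms_execution_def by auto
  have dvs: "(gsz r k (Suc s) * (v + 1)) dvd gtotal r k D (Suc s) g0" using dv g0s sk by auto
  have lb: "real (length (bucket r k D Q (Suc s) g0 j)) \<le> real (gtotal r k D (Suc s) g0) * (1 / real r + 1 / real (v + 1))"
  proof -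
    have "Suc s \<le> k" using sk by simp
    then show ?thesis using level_bound[where D=D and t="Suc s" and g=g0 and Q=Q and r=r and k=k and v=v and j=j, OF r1 v0 _ jr IH(1) IH(2) Qc dvs] by blast
  qed
  have "real (gtotal r k D (Suc s) g0) * (1 / real r + 1 / real (v + 1))
        \<le> (1 + real r / real v) ^ Suc s * real (\<Sum>i<p. length (inp i)) / real r ^ Suc s"
    by (rule real_step[OF _ IH(3) r0 v0]) simp
  then have "real (gtotal r k D (Suc (Suc s)) g) \<le> (1 + real r / real v) ^ Suc s * real (\<Sum>i<p. length (inp i)) / real r ^ Suc s"
    using lb tot by simp
  then show ?case using d exs(2) gsub by simp
qed

theorem lemma2:
  fixes p r k v t g j :: nat
    and inp :: "nat \<Rightarrow> 'a::linorder list"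
    and D :: "nat \<Rightarrow> nat \<Rightarrow> 'a list"
    and Q :: "nat \<Rightarrow> nat \<Rightarrow> nat list"
  assumes "k \<ge> 1" and "r \<ge> 1" and "p = r ^ k" and "v > 0"
    and "distinct (concat (map inp [0..<p]))"
    and "ms_execution r k v inp D Q"
    and "\<forall>t'\<in>{1..k}. \<forall>g' < r ^ (t' - 1). (gsz r k t' * (v + 1)) dvd gtotal r k D t' g'"
    and "1 \<le> t" and "t \<le> k" and "g < r ^ (t - 1)" and "j < r"
  shows "real (length (bucket r k D Q t g j))
           \<le> (1 + real r / real v) ^ t * real (\<Sum>i<p. length (inp i)) / real r ^ t"
proof -
  obtain s where ts: "t = Suc s" using assms(8) by (cases t) auto
  have sk: "s < k" "g < r ^ s" using ts assms(9,10) by auto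
  note inv = invariant[OF assms(2,4,3,5,6,7) sk]
  have Qc: "\<forall>i\<in>set (gpes r k t g). length (Q t i) = num_samples r k v D t g i \<and> evenly_spaced (length (D t i)) (Q t i)"
    using assms(6,8,9,10) unfolding ms_execution_def by auto
  have dvs: "(gsz r k t * (v + 1)) dvd gtotal r k D t g" using assms(7,8,9,10) by auto
  have lb: "real (length (bucket r k D Q t g j)) \<le> real (gtotal r k D t g) * (1 / real r + 1 / real (v + 1))"
  proof -
    have i1: "distinct (concat (map (D t) (gpes r k t g)))" "\<forall>i\<in>set (gpes r k t g). sorted (D t i)"
      using inv ts by auto
    show ?thesis by (rule level_bound[where D=D and t=t and g=g and Q=Q and r=r and k=k and v=v and j=j, OF assms(2,4,9,11) i1 Qc dvs])
  qed
  have "real (gtotal r k D t g) * (1 / real r + 1 / real (v + 1))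
        \<le> (1 + real r / real v) ^ Suc s * real (\<Sum>i<p. length (inp i)) / real r ^ Suc s"
    using inv ts assms(2,4) by (intro real_step) auto
  then show ?thesis using lb ts by simp
qed


end
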